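(* Let $d_2,a_2,h,q>0$, $0<x_2\le L$, and let $\bar w$ be the unique positive solution of $d_2w''-a_2w'+h-qw=0$ on $(0,x_2)$ with $d_2w'(0)-a_2w(0)=0$ and $d_2w'(x_2)-a_2w(x_2)=0$. Then: (i) $0<\bar w_x<\frac{a_2}{d_2}\bar w$ in $(0,x_2)$; (ii) $\bar w$ is strictly increasing with respect to $h$; (iii) $\lim_{h\to0}\bar w=0$ and $\lim_{h\to+\infty}\bar w=+\infty$ uniformly on $[0,x_2]$; (iv) $\bar w$ is strictly decreasing with respect to $q$; (v) $\lim_{q\to0}\bar w=+\infty$ and $\lim_{q\to+\infty}\bar w=0$ uniformly on $[0,x_2]$.
   Context: Monotonicity with respect to a parameter means that, for each fixed $x$ in $(0,x_2)$, $\bar w(x)$ is strictly monotone as a function of that parameter with all other parameters fixed. *)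

theory Defs
  imports "HOL-Analysis.Analysis"
begin

definition bvp_pos_sol :: "real \<Rightarrow> real \<Rightarrow> real \<Rightarrow> real \<Rightarrow> real \<Rightarrow> (real \<Rightarrow> real) \<Rightarrow> bool" where
  "bvp_pos_sol d2 a2 h q x2 w \<longleftrightarrow>
     (\<exists>w' w''.
        (\<forall>x\<in>{0..x2}. (w has_real_derivative w' x) (at x within {0..x2})) \<and>
        continuous_on {0..x2} w' \<and>
        (\<forall>x\<in>{0<..<x2}. (w' has_real_derivative w'' x) (at x)) \<and>
        (\<forall>x\<in>{0<..<x2}. d2 * w'' x - a2 * w' x + h - q * w x = 0) \<and>
        d2 * w' 0 - a2 * w 0 = 0 \<and>
        d2 * w' x2 - a2 * w x2 = 0 \<and>
        (\<forall>x\<in>{0..x2}. w x > 0))"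

text \<open>The unique positive solution, as a function on [0,x2]; to make it a
  well-defined single function we use the convention that it is 0 outside [0,x2].\<close>
definition wbar :: "real \<Rightarrow> real \<Rightarrow> real \<Rightarrow> real \<Rightarrow> real \<Rightarrow> real \<Rightarrow> real" where
  "wbar d2 a2 h q x2 =
     (THE w. bvp_pos_sol d2 a2 h q x2 w \<and> (\<forall>x. x \<notin> {0..x2} \<longrightarrow> w x = 0))"

end

theory Submission imports Defs begin

lemma my_mvt:
  fixes f f' :: "real \<Rightarrow> real"
  assumes "a < b" "continuous_on {a..b} f"
    "\<And>x. x \<in> {a<..<b} \<Longrightarrow> (f has_real_derivative f' x) (at x)"
  shows "\<exists>\<xi>\<in>{a<..<b}. f b - f a = (b - a) * f' \<xi>"
proof -
  have "\<And>x. a < x \<Longrightarrow> x < b \<Longrightarrow> f differentiable (at x)"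
    using assms(3) real_differentiable_def by auto
  from MVT[OF assms(1,2) this] obtain l z where
    z: "a < z" "z < b" "(f has_real_derivative l) (at z)" "f b - f a = (b - a) * l" by blast
  have "l = f' z" using DERIV_unique[OF z(3) assms(3)] z by auto
  then show ?thesis using z by auto
qed

lemma deriv_cont:
  assumes "\<And>x. x \<in> {0..X} \<Longrightarrow> (w has_real_derivative w' x) (at x within {0..X})"
  shows "continuous_on {0..X} (w::real\<Rightarrow>real)"
  unfolding continuous_on_eq_continuous_within using DERIV_continuous assms by blast

lemma deriv_int:
  assumes "\<And>x. x \<in> {0..X} \<Longrightarrow> (w has_real_derivative w' x) (at x within {0..X})"
    "x \<in> {0<..<X}"
  shows "(w has_real_derivative w' x) (at x)"
  using assms(1)[of x] assms(2) at_within_Icc_at[of 0 x X] by auto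

lemma neumann_mp:
  fixes u u' u'' E :: "real \<Rightarrow> real" and X :: real
  assumes X: "0 < X"
    and du: "\<And>x. x \<in> {0..X} \<Longrightarrow> (u has_real_derivative u' x) (at x within {0..X})"
    and cu': "continuous_on {0..X} u'"
    and du': "\<And>x. x \<in> {0<..<X} \<Longrightarrow> (u' has_real_derivative u'' x) (at x)"
    and E: "\<And>x. x \<in> {0<..<X} \<Longrightarrow> u'' x = E x"
    and cE: "continuous_on {0..X} E"
    and neg: "\<And>x. x \<in> {0..X} \<Longrightarrow> u x \<le> 0 \<Longrightarrow> u' x = 0 \<Longrightarrow> E x < 0"
    and b0: "u' 0 = 0" and bX: "u' X = 0"
  shows "\<forall>x\<in>{0..X}. u x > 0"
proof (rule ccontr)
  assume "\<not> ?thesis"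
  then obtain x0 where x0: "x0 \<in> {0..X}" "u x0 \<le> 0" by force
  have cu: "continuous_on {0..X} u" using deriv_cont du by blast
  obtain m where m: "m \<in> {0..X}" "\<forall>y\<in>{0..X}. u m \<le> u y"
    using continuous_attains_inf[OF compact_Icc _ cu] X by auto
  have um: "u m \<le> 0" using m x0 by force
  have u'm: "u' m = 0"
  proof (cases "m = 0 \<or> m = X")
    case True then show ?thesis using b0 bX by auto
  next
    case False
    then have mi: "m \<in> {0<..<X}" using m by auto
    show ?thesis
    proof (rule DERIV_local_min[OF deriv_int[OF du mi], of "min m (X - m)"])
      show "0 < min m (X - m)" using mi by auto
      show "\<forall>y. \<bar>m - y\<bar> < min m (X - m) \<longrightarrow> u m \<le> u y"
        using m(2) by (auto simp: abs_if split: if_splits)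
    qed
  qed
  have Em: "E m < 0" using neg m um u'm by auto
  have "continuous (at m within {0..X}) E" using cE m continuous_on_eq_continuous_within by blast
  then obtain \<delta> where \<delta>: "\<delta> > 0" "\<forall>y\<in>{0..X}. dist y m < \<delta> \<longrightarrow> dist (E y) (E m) < - E m"
    unfolding continuous_within_eps_delta using Em by (meson neg_0_less_iff_less)
  have En: "E y < 0" if "y \<in> {0..X}" "\<bar>y - m\<bar> < \<delta>" for y
    using \<delta>(2) that by (auto simp: dist_real_def)
  show False
  proof (cases "m < X")
    case True
    define t where "t = m + min \<delta> (X - m) / 2"
    have t: "m < t" "t < X" "t - m < \<delta>" using True \<delta>(1) by (auto simp: t_def min_def field_simps)
    have neg2: "u'' y < 0" if "y \<in> {m<..<t}" for y
      using E[of y] En[of y] that t m by auto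
    have u'neg: "u' s < 0" if "s \<in> {m<..t}" for s
    proof -
      have "u' s < u' m"
      proof (rule DERIV_neg_imp_decreasing_open[of m s u'])
        show "m < s" using that by auto
        show "\<exists>y. (u' has_real_derivative y) (at x) \<and> y < 0" if "m < x" "x < s" for x
          using du'[of x] neg2[of x] that \<open>s \<in> {m<..t}\<close> m t by auto
        show "continuous_on {m..s} u'" using cu' continuous_on_subset that m t by fastforce
      qed
      then show ?thesis using u'm by simp
    qed
    have "u t < u m"
    proof (rule DERIV_neg_imp_decreasing_open[of m t u])
      show "m < t" using t by auto
      show "\<exists>y. (u has_real_derivative y) (at x) \<and> y < 0" if "m < x" "x < t" for x
        using deriv_int[OF du, of x] u'neg[of x] that m t by auto
      show "continuous_on {m..t} u" using cu continuous_on_subset m t by fastforce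
    qed
    moreover have "t \<in> {0..X}" using m t by auto
    ultimately show False using m(2) by force
  next
    case False
    then have mX: "m = X" using m by auto
    define t where "t = X - min \<delta> X / 2"
    have t: "0 < t" "t < X" "X - t < \<delta>" using X \<delta>(1) by (auto simp: t_def min_def field_simps)
    have neg2: "u'' y < 0" if "y \<in> {t<..<X}" for y
      using E[of y] En[of y] that t mX by auto
    have u'pos: "u' s > 0" if "s \<in> {t..<X}" for s
    proof -
      have "u' X < u' s"
      proof (rule DERIV_neg_imp_decreasing_open[of s X u'])
        show "s < X" using that by auto
        show "\<exists>y. (u' has_real_derivative y) (at x) \<and> y < 0" if "s < x" "x < X" for x
          using du'[of x] neg2[of x] that \<open>s \<in> {t..<X}\<close> t by auto
        show "continuous_on {s..X} u'" using cu' continuous_on_subset that t by fastforce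
      qed
      then show ?thesis using u'm mX by simp
    qed
    have "u t < u X"
    proof (rule DERIV_pos_imp_increasing_open[of t X u])
      show "t < X" using t by auto
      show "\<exists>y. (u has_real_derivative y) (at x) \<and> 0 < y" if "t < x" "x < X" for x
        using deriv_int[OF du, of x] u'pos[of x] that t by auto
      show "continuous_on {t..X} u" using cu continuous_on_subset t by fastforce
    qed
    moreover have "t \<in> {0..X}" using t by auto
    ultimately show False using m(2) mX by force
  qed
qed

lemma robin_mp:
  fixes v v' v'' g :: "real \<Rightarrow> real" and d a q X :: real
  assumes d: "0 < d" and a: "0 < a" and q: "0 \<le> q" and X: "0 < X"
    and dv: "\<And>x. x \<in> {0..X} \<Longrightarrow> (v has_real_derivative v' x) (at x within {0..X})"
    and cv': "continuous_on {0..X} v'"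
    and dv': "\<And>x. x \<in> {0<..<X} \<Longrightarrow> (v' has_real_derivative v'' x) (at x)"
    and eq: "\<And>x. x \<in> {0<..<X} \<Longrightarrow> d * v'' x - a * v' x - q * v x = - g x"
    and cg: "continuous_on {0..X} g"
    and gpos: "\<And>x. x \<in> {0..X} \<Longrightarrow> g x > 0"
    and b0: "d * v' 0 - a * v 0 = 0" and bX: "d * v' X - a * v X = 0"
  shows "\<forall>x\<in>{0..X}. v x > 0"
proof -
  define k where "k = a / d"
  define u where "u x = exp (- k * x) * v x" for x
  define u' where "u' x = exp (- k * x) * (v' x - k * v x)" for x
  define u'' where "u'' x = exp (- k * x) * (v'' x - 2 * k * v' x + k^2 * v x)" for x
  define E where "E x = (- a * u' x + q * u x - exp (- k * x) * g x) / d" for x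
  have cv: "continuous_on {0..X} v" using deriv_cont dv by blast
  have du: "(u has_real_derivative u' x) (at x within {0..X})" if "x \<in> {0..X}" for x
  proof -
    have e: "((\<lambda>x. exp(-k*x)) has_real_derivative (-k*exp(-k*x))) (at x within {0..X})"
      by (auto intro!: derivative_eq_intros)
    show ?thesis using DERIV_mult[OF e dv[OF that]] unfolding u_def[abs_def]
      by (rule DERIV_cong) (simp add: u'_def algebra_simps)
  qed
  have du': "(u' has_real_derivative u'' x) (at x)" if "x \<in> {0<..<X}" for x
  proof -
    have e: "((\<lambda>x. exp(-k*x)) has_real_derivative (-k*exp(-k*x))) (at x)"
      by (auto intro!: derivative_eq_intros)
    have i: "((\<lambda>x. v' x - k * v x) has_real_derivative (v'' x - k * v' x)) (at x)"
      using dv'[OF that] deriv_int[OF dv that] by (auto intro!: derivative_eq_intros)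
    show ?thesis using DERIV_mult[OF e i] unfolding u'_def[abs_def]
      by (rule DERIV_cong) (simp add: u''_def algebra_simps power2_eq_square)
  qed
  have cu': "continuous_on {0..X} u'" unfolding u'_def
    by (intro continuous_intros cv cv')
  have cE: "continuous_on {0..X} E" unfolding E_def u'_def u_def
    by (intro continuous_intros cv cv' cg) (use d in auto)
  have E: "u'' x = E x" if "x \<in> {0<..<X}" for x
  proof -
    have v'': "v'' x = (a * v' x + q * v x - g x) / d" using eq[OF that] d
      by (simp add: field_simps)
    show ?thesis unfolding u''_def E_def u'_def u_def v'' k_def using d
      by (simp add: field_simps power2_eq_square)
  qed
  have neg: "E x < 0" if "x \<in> {0..X}" "u x \<le> 0" "u' x = 0" for x
  proof -
    have "q * u x \<le> 0" using q that by (simp add: mult_nonneg_nonpos)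
    moreover have "exp (- k * x) * g x > 0" using gpos[OF that(1)] by simp
    ultimately show ?thesis unfolding E_def using that d by (simp add: divide_neg_pos)
  qed
  have b0': "u' 0 = 0" unfolding u'_def k_def using b0 d by (simp add: field_simps)
  have bX': "u' X = 0" unfolding u'_def k_def using bX d by (simp add: field_simps)
  have "\<forall>x\<in>{0..X}. u x > 0"
    by (rule neumann_mp[OF X du cu' du' E cE neg b0' bX']) auto
  then show ?thesis unfolding u_def by (simp add: zero_less_mult_iff)
qed

definition S :: "real \<Rightarrow> real \<Rightarrow> real \<Rightarrow> real \<Rightarrow> real \<Rightarrow> (real \<Rightarrow> real) \<Rightarrow> (real \<Rightarrow> real) \<Rightarrow> (real \<Rightarrow> real) \<Rightarrow> bool" where
  "S d2 a2 h q x2 w w' w'' \<longleftrightarrow>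
        (\<forall>x\<in>{0..x2}. (w has_real_derivative w' x) (at x within {0..x2})) \<and>
        continuous_on {0..x2} w' \<and>
        (\<forall>x\<in>{0<..<x2}. (w' has_real_derivative w'' x) (at x)) \<and>
        (\<forall>x\<in>{0<..<x2}. d2 * w'' x - a2 * w' x + h - q * w x = 0) \<and>
        d2 * w' 0 - a2 * w 0 = 0 \<and>
        d2 * w' x2 - a2 * w x2 = 0 \<and>
        (\<forall>x\<in>{0..x2}. w x > 0)"

lemma bvp_S: "bvp_pos_sol d a h q X w \<longleftrightarrow> (\<exists>w' w''. S d a h q X w w' w'')"
  unfolding bvp_pos_sol_def S_def by blast

lemma uniq:
  assumes d: "0 < d" and a: "0 < a" and q: "0 < q" and X: "0 < X"
    and S1: "S d a h q X w1 w1' w1''" and S2: "S d a h q X w2 w2' w2''"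
  shows "\<forall>x\<in>{0..X}. w1 x = w2 x"
proof -
  define k where "k = a / d"
  define v where "v x = w1 x - w2 x" for x
  define v' where "v' x = w1' x - w2' x" for x
  define v'' where "v'' x = w1'' x - w2'' x" for x
  define z where "z x = d * v' x - a * v x" for x
  define F where "F x = z x * v x * exp (- k * x)" for x
  define F' where "F' x = exp (- k * x) * (q * (v x)^2 + (z x)^2 / d)" for x
  have dv: "(v has_real_derivative v' x) (at x within {0..X})" if "x \<in> {0..X}" for x
    using S1 S2 that unfolding S_def v_def[abs_def] v'_def
    by (auto intro!: derivative_eq_intros)
  have cv: "continuous_on {0..X} v" using deriv_cont dv by blast
  have cv': "continuous_on {0..X} v'" using S1 S2 unfolding S_def v'_def[abs_def]
    by (auto intro!: continuous_intros)
  have dv': "(v' has_real_derivative v'' x) (at x)" if "x \<in> {0<..<X}" for x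
    using S1 S2 that unfolding S_def v''_def v'_def[abs_def]
    by (auto intro!: derivative_eq_intros)
  have eqv: "d * v'' x - a * v' x = q * v x" if "x \<in> {0<..<X}" for x
  proof -
    have "d * w1'' x - a * w1' x + h - q * w1 x = 0" "d * w2'' x - a * w2' x + h - q * w2 x = 0"
      using S1 S2 that unfolding S_def by auto
    then show ?thesis unfolding v''_def v'_def v_def by (simp add: algebra_simps)
  qed
  have dF: "(F has_real_derivative F' x) (at x)" if "x \<in> {0<..<X}" for x
  proof -
    have dz: "(z has_real_derivative q * v x) (at x)"
      unfolding z_def[abs_def] using eqv[OF that] dv'[OF that] deriv_int[OF dv that]
      by (auto intro!: derivative_eq_intros) (simp add: algebra_simps)
    have e: "((\<lambda>x. exp(-k*x)) has_real_derivative (-k*exp(-k*x))) (at x)"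
      by (auto intro!: derivative_eq_intros)
    have 1: "((\<lambda>x. z x * v x * exp (- k * x)) has_real_derivative
       (q * v x * v x + v' x * z x) * exp (- k * x) + (-k*exp(-k*x)) * (z x * v x)) (at x)"
      by (intro DERIV_mult dz deriv_int[OF dv that] e)
    have vz: "v' x - k * v x = z x / d" unfolding z_def k_def using d by (simp add: field_simps)
    have "(q * v x * v x + v' x * z x) * exp (- k * x) + (-k*exp(-k*x)) * (z x * v x)
        = exp (- k * x) * (q * (v x)^2 + z x * (v' x - k * v x))"
      by (simp add: algebra_simps power2_eq_square)
    also have "\<dots> = F' x" unfolding vz F'_def by (simp add: power2_eq_square)
    finally have "(q * v x * v x + v' x * z x) * exp (- k * x) + (-k*exp(-k*x)) * (z x * v x) = F' x" .
    with 1 show ?thesis unfolding F_def[abs_def] by simp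
  qed
  have cF: "continuous_on {0..X} F" unfolding F_def z_def
    by (intro continuous_intros cv cv')
  have "z 0 = 0" "z X = 0" using S1 S2 unfolding z_def S_def v_def v'_def
    by (simp_all add: algebra_simps)
  then have F0: "F 0 = 0" "F X = 0" unfolding F_def by simp_all
  have F'nn: "F' x \<ge> 0" for x unfolding F'_def using q d by (auto intro!: add_nonneg_nonneg)
  have Fz: "F x = 0" if "x \<in> {0<..<X}" for x
  proof -
    have c1: "continuous_on {0..x} F" by (rule continuous_on_subset[OF cF]) (use that in auto)
    have "\<exists>\<xi>\<in>{0<..<x}. F x - F 0 = (x - 0) * F' \<xi>"
      by (rule my_mvt[OF _ c1]) (use that dF in auto)
    then obtain \<xi> where "\<xi> \<in> {0<..<x}" "F x - F 0 = (x - 0) * F' \<xi>" by blast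
    then have 1: "F x \<ge> 0" using F0 F'nn[of \<xi>] that by auto
    have c2: "continuous_on {x..X} F" by (rule continuous_on_subset[OF cF]) (use that in auto)
    have "\<exists>\<xi>\<in>{x<..<X}. F X - F x = (X - x) * F' \<xi>"
      by (rule my_mvt[OF _ c2]) (use that dF in auto)
    then obtain \<xi> where "\<xi> \<in> {x<..<X}" "F X - F x = (X - x) * F' \<xi>" by blast
    moreover have "(X - x) * F' \<xi> \<ge> 0" using F'nn[of \<xi>] that by (intro mult_nonneg_nonneg) auto
    ultimately have 2: "F x \<le> 0" using F0 by linarith
    from 1 2 show ?thesis by simp
  qed
  have vz: "v x = 0" if "x \<in> {0<..<X}" for x
  proof (rule ccontr)
    assume nz: "v x \<noteq> 0"
    have "F' x = 0"
    proof (rule DERIV_local_const[OF dF[OF that], of "min x (X - x)"])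
      show "0 < min x (X - x)" using that by auto
      show "\<forall>y. \<bar>x - y\<bar> < min x (X - x) \<longrightarrow> F x = F y"
        using Fz that by (auto simp: abs_if split: if_splits)
    qed
    moreover have "F' x > 0" unfolding F'_def using nz q d
      by (intro mult_pos_pos add_pos_nonneg) auto
    ultimately show False by simp
  qed
  have "v x = 0" if "x \<in> {0..X}" for x
    using continuous_constant_on_closure[of "{0<..<X}" v 0 x] vz that cv X
    by (simp add: closure_greaterThanLessThan)
  then show ?thesis unfolding v_def by auto
qed

lemma bvp_cong:
  assumes "bvp_pos_sol d a h q X w" "\<forall>x\<in>{0..X}. w x = v x" "0 \<le> X"
  shows "bvp_pos_sol d a h q X v"
proof -
  obtain w' w'' where s: "S d a h q X w w' w''" using assms(1) bvp_S by blast
  have "S d a h q X v w' w''"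
    unfolding S_def
  proof (intro conjI ballI)
    fix x assume x: "x \<in> {0..X}"
    show "(v has_real_derivative w' x) (at x within {0..X})"
      by (rule has_field_derivative_transform_within[of w _ _ _ 1]) (use s x assms(2) in \<open>auto simp: S_def\<close>)
  qed (use s assms in \<open>auto simp: S_def\<close>)
  then show ?thesis using bvp_S by blast
qed

lemma exists_sol:
  assumes d: "0 < d" and a: "0 < a" and h: "0 < h" and q: "0 < q" and X: "0 < X"
  shows "\<exists>w. bvp_pos_sol d a h q X w \<and> (\<forall>x\<in>{0<..<X}. \<exists>p>0. (w has_real_derivative p) (at x))
            \<and> (\<forall>x y. 0 \<le> x \<longrightarrow> x < y \<longrightarrow> y \<le> X \<longrightarrow> w x < w y)"
proof -
  define s where "s = sqrt (a^2 + 4*d*q)"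
  have nn: "0 \<le> a^2 + 4*d*q" using d q by (intro add_nonneg_nonneg) auto
  have s2: "s^2 = a^2 + 4*d*q" unfolding s_def using nn by simp
  have sa: "a < s" unfolding s_def by (rule real_less_rsqrt) (use d q in simp)
  define r1 where "r1 = (a + s) / (2*d)"
  define r2 where "r2 = (a - s) / (2*d)"
  have r1: "r1 > 0" unfolding r1_def using a sa d by simp
  have r2: "r2 < 0" unfolding r2_def using a sa d by (simp add: divide_neg_pos)
  have "d * r1^2 - a * r1 = (s^2 - a^2) / (4*d)" unfolding r1_def using d
    by (simp add: field_simps power2_eq_square)
  then have hr1: "d * r1^2 - a * r1 = q" using s2 d by simp
  have "d * r2^2 - a * r2 = (s^2 - a^2) / (4*d)" unfolding r2_def using d
    by (simp add: field_simps power2_eq_square)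
  then have hr2: "d * r2^2 - a * r2 = q" using s2 d by simp
  define E1 where "E1 = exp (r1 * X)"
  define E2 where "E2 = exp (r2 * X)"
  define D where "D = E1 - E2"
  define c where "c = a * h / q"
  define \<alpha> where "\<alpha> = c * (1 - E2) / D"
  define \<beta> where "\<beta> = c * (E1 - 1) / D"
  define A where "A = \<alpha> * r1 / q"
  define B where "B = \<beta> * r2 / q"
  have E1: "E1 > 1" unfolding E1_def using r1 X by simp
  have E2: "E2 < 1" unfolding E2_def using r2 X by (simp add: mult_neg_pos)
  have D: "D > 0" unfolding D_def using E1 E2 by simp
  have c: "c > 0" unfolding c_def using a h q by simp
  have \<alpha>: "\<alpha> > 0" unfolding \<alpha>_def using c E2 D by simp
  have \<beta>: "\<beta> > 0" unfolding \<beta>_def using c E1 D by simp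
  have A: "A > 0" unfolding A_def using \<alpha> r1 q by simp
  have B: "B < 0" unfolding B_def using \<beta> r2 q by (simp add: mult_pos_neg divide_neg_pos)
  define w where "w x = h/q + A * exp (r1 * x) + B * exp (r2 * x)" for x
  define w' where "w' x = A * r1 * exp (r1 * x) + B * r2 * exp (r2 * x)" for x
  define w'' where "w'' x = A * r1^2 * exp (r1 * x) + B * r2^2 * exp (r2 * x)" for x
  have dw: "(w has_real_derivative w' x) (at x)" for x
    unfolding w_def[abs_def] w'_def by (auto intro!: derivative_eq_intros simp: algebra_simps)
  have dw': "(w' has_real_derivative w'' x) (at x)" for x
    unfolding w'_def[abs_def] w''_def by (auto intro!: derivative_eq_intros simp: algebra_simps power2_eq_square)
  have cw': "continuous_on {0..X} w'" unfolding w'_def by (intro continuous_intros)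
  have cw: "continuous_on T w" for T unfolding w_def by (intro continuous_intros)
  have Az: "A * (d * r1 - a) = \<alpha>"
  proof -
    have "A * (d * r1 - a) = \<alpha> * (d * r1^2 - a * r1) / q" unfolding A_def
      by (simp add: algebra_simps power2_eq_square)
    then show ?thesis using hr1 q by simp
  qed
  have Bz: "B * (d * r2 - a) = \<beta>"
  proof -
    have "B * (d * r2 - a) = \<beta> * (d * r2^2 - a * r2) / q" unfolding B_def
      by (simp add: algebra_simps power2_eq_square)
    then show ?thesis using hr2 q by simp
  qed
  have zform: "d * w' x - a * w x = \<alpha> * exp (r1 * x) + \<beta> * exp (r2 * x) - c" for x
  proof -
    have "d * w' x - a * w x = A * (d * r1 - a) * exp (r1 * x) + B * (d * r2 - a) * exp (r2 * x) - a * h / q"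
      unfolding w_def w'_def by (simp add: algebra_simps)
    then show ?thesis using Az Bz c_def by simp
  qed
  have bc0: "\<alpha> + \<beta> = c" unfolding \<alpha>_def \<beta>_def using D by (simp add: field_simps) (simp add: D_def algebra_simps)
  have bcX: "\<alpha> * E1 + \<beta> * E2 = c" unfolding \<alpha>_def \<beta>_def using D by (simp add: field_simps) (simp add: D_def algebra_simps)
  have ode: "d * w'' x - a * w' x + h - q * w x = 0" for x
  proof -
    have "d * w'' x - a * w' x + h - q * w x
        = A * exp (r1 * x) * (d * r1^2 - a * r1 - q) + B * exp (r2 * x) * (d * r2^2 - a * r2 - q)"
      unfolding w_def w'_def w''_def using q by (simp add: field_simps)
    then show ?thesis using hr1 hr2 by simp
  qed
  have w'pos: "w' x > 0" for x
  proof -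
    have "A * r1 * exp (r1 * x) > 0" using A r1 by simp
    moreover have "B * r2 * exp (r2 * x) > 0" using B r2 by (simp add: mult_neg_neg)
    ultimately show ?thesis unfolding w'_def by simp
  qed
  have mono: "w x < w y" if "x < y" for x y
  proof (rule DERIV_pos_imp_increasing_open[of x y w])
    show "x < y" by fact
    show "\<exists>z. (w has_real_derivative z) (at t) \<and> 0 < z" for t using dw w'pos by blast
    show "continuous_on {x..y} w" by (rule cw)
  qed
  have z0: "d * w' 0 - a * w 0 = 0" using zform[of 0] bc0 by simp
  have zX: "d * w' X - a * w X = 0" using zform[of X] bcX unfolding E1_def E2_def by (simp add: mult.commute)
  have w0: "w 0 > 0"
  proof -
    have "a * w 0 > 0" using z0 w'pos[of 0] d by (metis eq_iff_diff_eq_0 mult_pos_pos)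
    then show ?thesis using a by (simp add: zero_less_mult_iff)
  qed
  have wpos: "w x > 0" if "x \<in> {0..X}" for x
    using mono[of 0 x] w0 that by (cases "x = 0") auto
  have "S d a h q X w w' w''" unfolding S_def
    using dw dw' cw' ode z0 zX wpos by (auto intro: has_field_derivative_at_within)
  then show ?thesis using bvp_S mono dw w'pos by blast
qed

lemma wbar_char:
  assumes d: "0 < d" and a: "0 < a" and h: "0 < h" and q: "0 < q" and X: "0 < X"
  shows "bvp_pos_sol d a h q X (wbar d a h q X)
     \<and> (\<forall>x\<in>{0<..<X}. \<exists>p>0. (wbar d a h q X has_real_derivative p) (at x))
     \<and> (\<forall>x y. 0 \<le> x \<longrightarrow> x < y \<longrightarrow> y \<le> X \<longrightarrow> wbar d a h q X x < wbar d a h q X y)"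
proof -
  obtain w where w: "bvp_pos_sol d a h q X w" "\<forall>x\<in>{0<..<X}. \<exists>p>0. (w has_real_derivative p) (at x)"
    "\<forall>x y. 0 \<le> x \<longrightarrow> x < y \<longrightarrow> y \<le> X \<longrightarrow> w x < w y"
    using exists_sol[OF d a h q X] by blast
  define w0 where "w0 x = (if x \<in> {0..X} then w x else 0)" for x
  have b0: "bvp_pos_sol d a h q X w0"
    by (rule bvp_cong[OF w(1)]) (use X in \<open>auto simp: w0_def\<close>)
  have P: "bvp_pos_sol d a h q X w0 \<and> (\<forall>x. x \<notin> {0..X} \<longrightarrow> w0 x = 0)"
    using b0 by (auto simp: w0_def)
  have eq: "wbar d a h q X = w0" unfolding wbar_def
  proof (rule the_equality)
    show "bvp_pos_sol d a h q X w0 \<and> (\<forall>x. x \<notin> {0..X} \<longrightarrow> w0 x = 0)" by (rule P)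
    fix w1 assume w1: "bvp_pos_sol d a h q X w1 \<and> (\<forall>x. x \<notin> {0..X} \<longrightarrow> w1 x = 0)"
    obtain u' u'' where s1: "S d a h q X w1 u' u''" using w1 bvp_S by blast
    obtain v' v'' where s0: "S d a h q X w0 v' v''" using b0 bvp_S by blast
    have "\<forall>x\<in>{0..X}. w1 x = w0 x" by (rule uniq[OF d a q X s1 s0])
    then show "w1 = w0"
    proof (intro ext)
      fix x assume eqs: "\<forall>x\<in>{0..X}. w1 x = w0 x"
      show "w1 x = w0 x"
      proof (cases "x \<in> {0..X}")
        case True then show ?thesis using eqs by blast
      next
        case False then show ?thesis using w1 P by simp
      qed
    qed
  qed
  have der: "\<exists>p>0. (w0 has_real_derivative p) (at x)" if xin: "x \<in> {0<..<X}" for x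
  proof -
    obtain p where p: "p > 0" "(w has_real_derivative p) (at x)" using bspec[OF w(2) xin] by (elim exE conjE)
    have "(w0 has_real_derivative p) (at x)"
      by (rule has_field_derivative_transform_within_open[OF p(2) open_greaterThanLessThan xin])
        (auto simp: w0_def)
    then show ?thesis using p(1) by (intro exI[of _ p] conjI)
  qed
  have m0: "\<forall>x y. 0 \<le> x \<longrightarrow> x < y \<longrightarrow> y \<le> X \<longrightarrow> w0 x < w0 y"
  proof (intro allI impI)
    fix x y :: real assume "0 \<le> x" "x < y" "y \<le> X"
    then show "w0 x < w0 y" using w(3) unfolding w0_def by simp
  qed
  show ?thesis unfolding eq using b0 der m0 by blast
qed

lemma zneg:
  assumes d: "0 < d" and a: "0 < a" and q: "0 < q" and X: "0 < X"
    and s: "S d a h q X w w' w''"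
    and mono: "\<forall>x y. 0 \<le> x \<longrightarrow> x < y \<longrightarrow> y \<le> X \<longrightarrow> w x < w y"
  shows "\<forall>x\<in>{0<..<X}. d * w' x - a * w x < 0"
proof
  fix x0 assume x0: "x0 \<in> {0<..<X}"
  define z where "z x = d * w' x - a * w x" for x
  have dw: "\<And>x. x \<in> {0..X} \<Longrightarrow> (w has_real_derivative w' x) (at x within {0..X})"
    using s unfolding S_def by auto
  have dz: "(z has_real_derivative q * w x - h) (at x)" if "x \<in> {0<..<X}" for x
  proof -
    have "d * w'' x - a * w' x + h - q * w x = 0" "(w' has_real_derivative w'' x) (at x)"
      using s that unfolding S_def by auto
    then show ?thesis unfolding z_def[abs_def] using deriv_int[OF dw that]
      by (auto intro!: derivative_eq_intros) (simp add: algebra_simps)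
  qed
  have cz: "continuous_on {0..X} z" unfolding z_def using s deriv_cont[OF dw]
    unfolding S_def by (auto intro!: continuous_intros)
  have z0: "z 0 = 0" "z X = 0" using s unfolding S_def z_def by auto
  show "d * w' x0 - a * w x0 < 0"
  proof (rule ccontr)
    assume "\<not> ?thesis"
    then have zx0: "z x0 \<ge> 0" unfolding z_def by simp
    have c1: "continuous_on {0..x0} z" by (rule continuous_on_subset[OF cz]) (use x0 in auto)
    have c2: "continuous_on {x0..X} z" by (rule continuous_on_subset[OF cz]) (use x0 in auto)
    have "\<exists>\<xi>\<in>{0<..<x0}. z x0 - z 0 = (x0 - 0) * (q * w \<xi> - h)"
      by (rule my_mvt[OF _ c1]) (use x0 dz in auto)
    then obtain \<xi>1 where \<xi>1: "\<xi>1 \<in> {0<..<x0}" "z x0 - z 0 = (x0 - 0) * (q * w \<xi>1 - h)" by blast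
    have "\<exists>\<xi>\<in>{x0<..<X}. z X - z x0 = (X - x0) * (q * w \<xi> - h)"
      by (rule my_mvt[OF _ c2]) (use x0 dz in auto)
    then obtain \<xi>2 where \<xi>2: "\<xi>2 \<in> {x0<..<X}" "z X - z x0 = (X - x0) * (q * w \<xi>2 - h)" by blast
    have 1: "q * w \<xi>1 - h \<ge> 0" using \<xi>1 z0 zx0 x0 by (simp add: zero_le_mult_iff)
    have "(X - x0) * (q * w \<xi>2 - h) \<le> 0" using \<xi>2(2) z0 zx0 by simp
    moreover have "X - x0 > 0" using x0 by simp
    ultimately have 2: "q * w \<xi>2 - h \<le> 0" by (simp add: mult_le_0_iff)
    have "w \<xi>1 < w \<xi>2" using mono \<xi>1 \<xi>2 by auto
    then have "q * w \<xi>1 < q * w \<xi>2" using q by simp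
    then show False using 1 2 by simp
  qed
qed

lemma bounds:
  assumes d: "0 < d" and a: "0 < a" and q: "0 < q" and X: "0 < X"
    and s: "S d a h q X w w' w''"
    and mono: "\<forall>x y. 0 \<le> x \<longrightarrow> x < y \<longrightarrow> y \<le> X \<longrightarrow> w x < w y"
  shows "\<forall>x\<in>{0..X}. h / q \<le> exp (a / d * X) * w x \<and> w x \<le> exp (a / d * X) * (h / q)"
proof
  fix x assume x: "x \<in> {0..X}"
  define k where "k = a / d"
  define z where "z x = d * w' x - a * w x" for x
  have dw: "\<And>x. x \<in> {0..X} \<Longrightarrow> (w has_real_derivative w' x) (at x within {0..X})"
    using s unfolding S_def by auto
  have cw: "continuous_on {0..X} w" using deriv_cont[OF dw] .
  have zn: "\<forall>x\<in>{0<..<X}. z x < 0" using zneg[OF d a q X s mono] unfolding z_def .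
  have dz: "(z has_real_derivative q * w x - h) (at x)" if "x \<in> {0<..<X}" for x
  proof -
    have "d * w'' x - a * w' x + h - q * w x = 0" "(w' has_real_derivative w'' x) (at x)"
      using s that unfolding S_def by auto
    then show ?thesis unfolding z_def[abs_def] using deriv_int[OF dw that]
      by (auto intro!: derivative_eq_intros) (simp add: algebra_simps)
  qed
  have cz: "continuous_on {0..X} z" unfolding z_def using s cw
    unfolding S_def by (auto intro!: continuous_intros)
  have z0: "z 0 = 0" "z X = 0" using s unfolding S_def z_def by auto
  have "\<exists>\<xi>\<in>{0<..<X}. z X - z 0 = (X - 0) * (q * w \<xi> - h)"
    by (rule my_mvt[OF _ cz]) (use X dz in auto)
  then obtain \<xi> where \<xi>: "\<xi> \<in> {0<..<X}" "z X - z 0 = (X - 0) * (q * w \<xi> - h)" by blast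
  have w\<xi>: "w \<xi> = h / q" using \<xi> z0 X q by (simp add: field_simps)
  define p where "p x = exp (- k * x) * w x" for x
  define p' where "p' x = exp (- k * x) * (z x / d)" for x
  have dp: "(p has_real_derivative p' x) (at x)" if "x \<in> {0<..<X}" for x
  proof -
    have "(p has_real_derivative (- k * exp (- k * x)) * w x + w' x * exp (- k * x)) (at x)"
      unfolding p_def[abs_def] using deriv_int[OF dw that]
      by (intro DERIV_mult) (auto intro!: derivative_eq_intros)
    moreover have "(- k * exp (- k * x)) * w x + w' x * exp (- k * x) = p' x"
      unfolding p'_def z_def k_def using d by (simp add: field_simps)
    ultimately show ?thesis by simp
  qed
  have cp: "continuous_on {0..X} p" unfolding p_def by (intro continuous_intros cw)
  have "\<exists>\<eta>\<in>{0<..<X}. p X - p 0 = (X - 0) * p' \<eta>"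
    by (rule my_mvt[OF _ cp]) (use X dp in auto)
  then obtain \<eta> where \<eta>: "\<eta> \<in> {0<..<X}" "p X - p 0 = (X - 0) * p' \<eta>" by blast
  have "p' \<eta> < 0" unfolding p'_def using zn \<eta>(1) d by (simp add: mult_pos_neg divide_neg_pos)
  then have "X * p' \<eta> < 0" using X by (simp add: mult_pos_neg)
  then have "p X < p 0" using \<eta>(2) by simp
  then have "exp (- k * X) * w X < w 0" unfolding p_def by simp
  then have "exp (k * X) * (exp (- k * X) * w X) < exp (k * X) * w 0" by simp
  then have wXw0: "w X < exp (k * X) * w 0" by (simp add: exp_minus field_simps)
  have mono': "w u \<le> w v" if "0 \<le> u" "u \<le> v" "v \<le> X" for u v
    using mono that by (cases "u = v") (auto simp: less_imp_le)
  have 1: "w 0 \<le> w x" "w x \<le> w X" using mono' x by auto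
  have 2: "w 0 \<le> h / q" "h / q \<le> w X" using mono'[of 0 \<xi>] mono'[of \<xi> X] \<xi>(1) w\<xi> by auto
  have e1: "exp (k * X) * w 0 \<le> exp (k * X) * w x" using 1(1) by simp
  have e2: "exp (k * X) * w 0 \<le> exp (k * X) * (h / q)" using 2(1) by (intro mult_left_mono) auto
  have "h / q \<le> exp (k * X) * w x"
    using wXw0 1 2 e1 by linarith
  moreover have "w x \<le> exp (k * X) * (h / q)"
    using wXw0 1 2 e2 by linarith
  ultimately show "h / q \<le> exp (a / d * X) * w x \<and> w x \<le> exp (a / d * X) * (h / q)"
    unfolding k_def by simp
qed

lemma wbar_S:
  assumes d: "0 < d" and a: "0 < a" and h: "0 < h" and q: "0 < q" and X: "0 < X"
  obtains w' w'' where "S d a h q X (wbar d a h q X) w' w''"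
    "\<forall>x\<in>{0<..<X}. \<exists>p>0. (wbar d a h q X has_real_derivative p) (at x)"
    "\<forall>x y. 0 \<le> x \<longrightarrow> x < y \<longrightarrow> y \<le> X \<longrightarrow> wbar d a h q X x < wbar d a h q X y"
  using wbar_char[OF d a h q X] bvp_S by metis

lemma wbar_bounds:
  assumes d: "0 < d" and a: "0 < a" and h: "0 < h" and q: "0 < q" and X: "0 < X"
    and x: "x \<in> {0..X}"
  shows "h / q \<le> exp (a / d * X) * wbar d a h q X x \<and> wbar d a h q X x \<le> exp (a / d * X) * (h / q)
    \<and> wbar d a h q X x > 0"
proof -
  obtain w' w'' where s: "S d a h q X (wbar d a h q X) w' w''"
    and m: "\<forall>x y. 0 \<le> x \<longrightarrow> x < y \<longrightarrow> y \<le> X \<longrightarrow> wbar d a h q X x < wbar d a h q X y"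
    using wbar_S[OF d a h q X] by metis
  show ?thesis using bounds[OF d a q X s m] x s unfolding S_def by auto
qed

lemma mono_h:
  assumes d: "0 < d" and a: "0 < a" and q: "0 < q" and X: "0 < X" and h1: "0 < h1" and h12: "h1 < h2"
  shows "\<forall>x\<in>{0..X}. wbar d a h1 q X x < wbar d a h2 q X x"
proof -
  have h2: "0 < h2" using h1 h12 by simp
  obtain u' u'' where s1: "S d a h1 q X (wbar d a h1 q X) u' u''"
    using wbar_S[OF d a h1 q X] by metis
  obtain v' v'' where s2: "S d a h2 q X (wbar d a h2 q X) v' v''"
    using wbar_S[OF d a h2 q X] by metis
  have "\<forall>x\<in>{0..X}. (\<lambda>x. wbar d a h2 q X x - wbar d a h1 q X x) x > 0"
  proof (rule robin_mp[of d a q X _ "\<lambda>x. v' x - u' x" "\<lambda>x. v'' x - u'' x" "\<lambda>x. h2 - h1"])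
    show "0 < d" "0 < a" "0 \<le> q" "0 < X" using d a q X by auto
    show "((\<lambda>x. wbar d a h2 q X x - wbar d a h1 q X x) has_real_derivative v' x - u' x) (at x within {0..X})"
      if "x \<in> {0..X}" for x using s1 s2 that unfolding S_def by (intro DERIV_diff) auto
    show "continuous_on {0..X} (\<lambda>x. v' x - u' x)" using s1 s2 unfolding S_def
      by (intro continuous_intros) auto
    show "((\<lambda>x. v' x - u' x) has_real_derivative v'' x - u'' x) (at x)"
      if "x \<in> {0<..<X}" for x using s1 s2 that unfolding S_def by (intro DERIV_diff) auto
    show "d * (v'' x - u'' x) - a * (v' x - u' x) - q * (wbar d a h2 q X x - wbar d a h1 q X x) = - (h2 - h1)"
      if "x \<in> {0<..<X}" for x
    proof -
      have "d * u'' x - a * u' x + h1 - q * wbar d a h1 q X x = 0"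
        "d * v'' x - a * v' x + h2 - q * wbar d a h2 q X x = 0"
        using s1 s2 that unfolding S_def by auto
      then show ?thesis by (simp add: algebra_simps)
    qed
    show "continuous_on {0..X} (\<lambda>x. h2 - h1)" by simp
    show "\<And>x. x \<in> {0..X} \<Longrightarrow> h2 - h1 > 0" using h12 by simp
    show "d * (v' 0 - u' 0) - a * (wbar d a h2 q X 0 - wbar d a h1 q X 0) = 0"
      using s1 s2 unfolding S_def by (simp add: algebra_simps)
    show "d * (v' X - u' X) - a * (wbar d a h2 q X X - wbar d a h1 q X X) = 0"
      using s1 s2 unfolding S_def by (simp add: algebra_simps)
  qed
  then show ?thesis by simp
qed

lemma mono_q:
  assumes d: "0 < d" and a: "0 < a" and h: "0 < h" and X: "0 < X" and q1: "0 < q1" and q12: "q1 < q2"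
  shows "\<forall>x\<in>{0..X}. wbar d a h q2 X x < wbar d a h q1 X x"
proof -
  have q2: "0 < q2" using q1 q12 by simp
  obtain u' u'' where s1: "S d a h q1 X (wbar d a h q1 X) u' u''"
    using wbar_S[OF d a h q1 X] by metis
  obtain v' v'' where s2: "S d a h q2 X (wbar d a h q2 X) v' v''"
    using wbar_S[OF d a h q2 X] by metis
  have c2: "continuous_on {0..X} (wbar d a h q2 X)"
    using s2 deriv_cont[of X "wbar d a h q2 X" v'] unfolding S_def by auto
  have "\<forall>x\<in>{0..X}. (\<lambda>x. wbar d a h q1 X x - wbar d a h q2 X x) x > 0"
  proof (rule robin_mp[of d a q1 X _ "\<lambda>x. u' x - v' x" "\<lambda>x. u'' x - v'' x" "\<lambda>x. (q2 - q1) * wbar d a h q2 X x"])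
    show "0 < d" "0 < a" "0 \<le> q1" "0 < X" using d a q1 X by auto
    show "((\<lambda>x. wbar d a h q1 X x - wbar d a h q2 X x) has_real_derivative u' x - v' x) (at x within {0..X})"
      if "x \<in> {0..X}" for x using s1 s2 that unfolding S_def by (intro DERIV_diff) auto
    show "continuous_on {0..X} (\<lambda>x. u' x - v' x)" using s1 s2 unfolding S_def
      by (intro continuous_intros) auto
    show "((\<lambda>x. u' x - v' x) has_real_derivative u'' x - v'' x) (at x)"
      if "x \<in> {0<..<X}" for x using s1 s2 that unfolding S_def by (intro DERIV_diff) auto
    show "d * (u'' x - v'' x) - a * (u' x - v' x) - q1 * (wbar d a h q1 X x - wbar d a h q2 X x)
        = - ((q2 - q1) * wbar d a h q2 X x)"
      if "x \<in> {0<..<X}" for x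
    proof -
      have "d * u'' x - a * u' x + h - q1 * wbar d a h q1 X x = 0"
        "d * v'' x - a * v' x + h - q2 * wbar d a h q2 X x = 0"
        using s1 s2 that unfolding S_def by auto
      then show ?thesis by (simp add: algebra_simps)
    qed
    show "continuous_on {0..X} (\<lambda>x. (q2 - q1) * wbar d a h q2 X x)"
      by (intro continuous_intros c2)
    show "\<And>x. x \<in> {0..X} \<Longrightarrow> (q2 - q1) * wbar d a h q2 X x > 0"
      using q12 s2 unfolding S_def by simp
    show "d * (u' 0 - v' 0) - a * (wbar d a h q1 X 0 - wbar d a h q2 X 0) = 0"
      using s1 s2 unfolding S_def by (simp add: algebra_simps)
    show "d * (u' X - v' X) - a * (wbar d a h q1 X X - wbar d a h q2 X X) = 0"
      using s1 s2 unfolding S_def by (simp add: algebra_simps)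
  qed
  then show ?thesis by simp
qed

theorem lemma3p3:
  fixes d2 a2 h q x2 L :: real
  assumes "d2 > 0" "a2 > 0" "h > 0" "q > 0" "0 < x2" "x2 \<le> L"
  shows
    "(\<forall>x\<in>{0<..<x2}. 0 < deriv (wbar d2 a2 h q x2) x \<and>
        deriv (wbar d2 a2 h q x2) x < a2 / d2 * wbar d2 a2 h q x2 x)
   \<and> (\<forall>h1 h2. 0 < h1 \<and> h1 < h2 \<longrightarrow>
        (\<forall>x\<in>{0<..<x2}. wbar d2 a2 h1 q x2 x < wbar d2 a2 h2 q x2 x))
   \<and> uniform_limit {0..x2} (\<lambda>h'. wbar d2 a2 h' q x2) (\<lambda>_. 0) (at_right 0)
   \<and> (\<forall>M. \<forall>\<^sub>F h' in at_top. \<forall>x\<in>{0..x2}. wbar d2 a2 h' q x2 x > M)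
   \<and> (\<forall>q1 q2. 0 < q1 \<and> q1 < q2 \<longrightarrow>
        (\<forall>x\<in>{0<..<x2}. wbar d2 a2 h q2 x2 x < wbar d2 a2 h q1 x2 x))
   \<and> (\<forall>M. \<forall>\<^sub>F q' in at_right 0. \<forall>x\<in>{0..x2}. wbar d2 a2 h q' x2 x > M)
   \<and> uniform_limit {0..x2} (\<lambda>q'. wbar d2 a2 h q' x2) (\<lambda>_. 0) at_top"
proof -
  note d = assms(1) and a = assms(2) and h = assms(3) and q = assms(4) and X = assms(5)
  define K where "K = exp (a2 / d2 * x2)"
  have K: "K > 0" unfolding K_def by simp
  have B: "h' / q' \<le> K * wbar d2 a2 h' q' x2 x \<and> wbar d2 a2 h' q' x2 x \<le> K * (h' / q')
      \<and> wbar d2 a2 h' q' x2 x > 0" if "0 < h'" "0 < q'" "x \<in> {0..x2}" for h' q' x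
    using wbar_bounds[OF d a that(1,2) X that(3)] unfolding K_def by simp
  have P1: "\<forall>x\<in>{0<..<x2}. 0 < deriv (wbar d2 a2 h q x2) x \<and>
        deriv (wbar d2 a2 h q x2) x < a2 / d2 * wbar d2 a2 h q x2 x"
  proof
    fix x assume x: "x \<in> {0<..<x2}"
    obtain w' w'' where s: "S d2 a2 h q x2 (wbar d2 a2 h q x2) w' w''"
      and dp: "\<forall>x\<in>{0<..<x2}. \<exists>p>0. (wbar d2 a2 h q x2 has_real_derivative p) (at x)"
      and m: "\<forall>x y. 0 \<le> x \<longrightarrow> x < y \<longrightarrow> y \<le> x2 \<longrightarrow> wbar d2 a2 h q x2 x < wbar d2 a2 h q x2 y"
      using wbar_S[OF d a h q X] by metis
    have dw: "(wbar d2 a2 h q x2 has_real_derivative w' x) (at x)"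
      using deriv_int[of x2 "wbar d2 a2 h q x2" w' x] s x unfolding S_def by auto
    obtain p where p: "p > 0" "(wbar d2 a2 h q x2 has_real_derivative p) (at x)"
      using bspec[OF dp x] by (elim exE conjE)
    have pw: "p = w' x" using DERIV_unique[OF p(2) dw] .
    have de: "deriv (wbar d2 a2 h q x2) x = w' x" using DERIV_imp_deriv[OF dw] .
    have zn: "d2 * w' x - a2 * wbar d2 a2 h q x2 x < 0" using zneg[OF d a q X s m] x by auto
    have "w' x < a2 / d2 * wbar d2 a2 h q x2 x" using zn d by (simp add: field_simps)
    then show "0 < deriv (wbar d2 a2 h q x2) x \<and>
        deriv (wbar d2 a2 h q x2) x < a2 / d2 * wbar d2 a2 h q x2 x"
      using de pw p(1) by simp
  qed
  have P2: "\<forall>h1 h2. 0 < h1 \<and> h1 < h2 \<longrightarrow>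
        (\<forall>x\<in>{0<..<x2}. wbar d2 a2 h1 q x2 x < wbar d2 a2 h2 q x2 x)"
    using mono_h[OF d a q X] by fastforce
  have P5: "\<forall>q1 q2. 0 < q1 \<and> q1 < q2 \<longrightarrow>
        (\<forall>x\<in>{0<..<x2}. wbar d2 a2 h q2 x2 x < wbar d2 a2 h q1 x2 x)"
    using mono_q[OF d a h X] by fastforce
  have P3: "uniform_limit {0..x2} (\<lambda>h'. wbar d2 a2 h' q x2) (\<lambda>_. 0) (at_right 0)"
    unfolding uniform_limit_iff
  proof (intro allI impI)
    fix e :: real assume e: "e > 0"
    have ep: "e * q / K > 0" using e q K by simp
    show "\<forall>\<^sub>F h' in at_right 0. \<forall>x\<in>{0..x2}. dist (wbar d2 a2 h' q x2 x) 0 < e"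
    proof (rule eventually_mono[OF eventually_at_right_real[OF ep]])
      fix h' assume h': "h' \<in> {0<..<e * q / K}"
      show "\<forall>x\<in>{0..x2}. dist (wbar d2 a2 h' q x2 x) 0 < e"
      proof
        fix x assume x: "x \<in> {0..x2}"
        have b: "wbar d2 a2 h' q x2 x \<le> K * (h' / q)" "wbar d2 a2 h' q x2 x > 0"
          using B[of h' q x] h' q x by auto
        have "h' * K < e * q" using h' K by (simp add: pos_less_divide_eq)
        then have "K * (h' / q) < e" using q by (simp add: field_simps)
        then show "dist (wbar d2 a2 h' q x2 x) 0 < e" using b by (simp add: dist_real_def)
      qed
    qed
  qed
  have P4: "\<forall>M. \<forall>\<^sub>F h' in at_top. \<forall>x\<in>{0..x2}. wbar d2 a2 h' q x2 x > M"
  proof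
    fix M :: real
    define N where "N = K * q * (\<bar>M\<bar> + 1)"
    have N: "N > 0" unfolding N_def using K q by (simp add: add_pos_nonneg)
    show "\<forall>\<^sub>F h' in at_top. \<forall>x\<in>{0..x2}. wbar d2 a2 h' q x2 x > M"
      unfolding eventually_at_top_linorder
    proof (intro exI allI impI ballI)
      fix h' x assume h': "h' \<ge> N" and x: "x \<in> {0..x2}"
      have hp: "h' > 0" using h' N by simp
      have b: "h' / q \<le> K * wbar d2 a2 h' q x2 x" using B[of h' q x] hp q x by auto
      have "K * (\<bar>M\<bar> + 1) \<le> h' / q" using h' q unfolding N_def by (simp add: field_simps)
      then have "K * (\<bar>M\<bar> + 1) \<le> K * wbar d2 a2 h' q x2 x" using b by simp
      then have "\<bar>M\<bar> + 1 \<le> wbar d2 a2 h' q x2 x" using K by simp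
      then show "wbar d2 a2 h' q x2 x > M" by simp
    qed
  qed
  have P6: "\<forall>M. \<forall>\<^sub>F q' in at_right 0. \<forall>x\<in>{0..x2}. wbar d2 a2 h q' x2 x > M"
  proof
    fix M :: real
    define c where "c = h / (K * (\<bar>M\<bar> + 1))"
    have c: "c > 0" unfolding c_def using h K by (simp add: add_pos_nonneg)
    show "\<forall>\<^sub>F q' in at_right 0. \<forall>x\<in>{0..x2}. wbar d2 a2 h q' x2 x > M"
    proof (rule eventually_mono[OF eventually_at_right_real[OF c]])
      fix q' assume q': "q' \<in> {0<..<c}"
      show "\<forall>x\<in>{0..x2}. wbar d2 a2 h q' x2 x > M"
      proof
        fix x assume x: "x \<in> {0..x2}"
        have b: "h / q' \<le> K * wbar d2 a2 h q' x2 x" using B[of h q' x] h q' x by auto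
        have "q' * (K * (\<bar>M\<bar> + 1)) < h" using q' K unfolding c_def
          by (simp add: pos_less_divide_eq add_pos_nonneg)
        then have "K * (\<bar>M\<bar> + 1) < h / q'" using q' by (simp add: field_simps)
        then have "K * (\<bar>M\<bar> + 1) < K * wbar d2 a2 h q' x2 x" using b by simp
        then have "\<bar>M\<bar> + 1 < wbar d2 a2 h q' x2 x" using K by simp
        then show "wbar d2 a2 h q' x2 x > M" by simp
      qed
    qed
  qed
  have P7: "uniform_limit {0..x2} (\<lambda>q'. wbar d2 a2 h q' x2) (\<lambda>_. 0) at_top"
    unfolding uniform_limit_iff
  proof (intro allI impI)
    fix e :: real assume e: "e > 0"
    define N where "N = K * h / e + 1"
    have N: "N > 0" unfolding N_def using K h e by (simp add: add_pos_pos)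
    show "\<forall>\<^sub>F q' in at_top. \<forall>x\<in>{0..x2}. dist (wbar d2 a2 h q' x2 x) 0 < e"
      unfolding eventually_at_top_linorder
    proof (intro exI allI impI ballI)
      fix q' x assume q': "q' \<ge> N" and x: "x \<in> {0..x2}"
      have qp: "q' > 0" using q' N by simp
      have b: "wbar d2 a2 h q' x2 x \<le> K * (h / q')" "wbar d2 a2 h q' x2 x > 0"
        using B[of h q' x] h qp x by auto
      have "K * h / e < q'" using q' unfolding N_def by simp
      then have "K * h < e * q'" using e by (simp add: pos_divide_less_eq mult.commute)
      then have "K * (h / q') < e" using qp by (simp add: field_simps)
      then show "dist (wbar d2 a2 h q' x2 x) 0 < e" using b by (simp add: dist_real_def)
    qed
  qed
  show ?thesis using P1 P2 P3 P4 P5 P6 P7 by blast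
qed

end
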